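(* In the $L^p$ setting of the context ($1<p<\infty$), assume in addition that the measure space $(\Omega,\mu)$ is separable, $G$ is countable and $E$ is separable. Then for every finite $F\subset G$ and $a_g\in A$ ($g\in F$), the element $\bar b=\sum_{g\in F}\bar a_gV_g\in B(\bar A,V_g)$ satisfies $$\|\bar b\|_{L(H)}=\operatorname{ess\,sup}_{x\in\Omega}\|b_x\|_{L(l^p(G,E))},$$ where $b_x=\sum_{g\in F}\pi_x(a_g)\pi_x(T_g)$.
   Context: Setting: $(\Omega,\mu)$ is a measure space with $\sigma$-additive $\sigma$-finite measure $\mu$, $E$ a Banach space, $G$ a discrete group, $\{\alpha_g\}_{g\in G}$ a group of invertible measurable maps $\Omega\to\Omega$ ($\alpha_{gh}=\alpha_g\circ\alpha_h$, $\alpha_e=\mathrm{id}$) such that $\alpha_g$ and $\alpha_g^{-1}$ preserve $\mu$-null sets. $D=L^p_\mu(\Omega,E)$; $A=L^\infty_\mu(\Omega,L(E))$ acts on $D$ by $(af)(x)=a(x)f(x)$; $(T_gf)(x)=\rho_g(x)^{1/p}f(\alpha_g^{-1}(x))$, where $\rho_g$ is the Radon–Nikodym derivative of the measure $\Delta\mapsto\mu(\alpha_g^{-1}(\Delta))$ with respect to $\mu$; $\hat T_g(a)=T_gaT_g^{-1}$, i.e. $\hat T_g(a)(x)=a(\alpha_g^{-1}(x))$. Regular representation: $H=l^p(G,D)$; $(V_{g_0}\xi)(g)=\xi(gg_0)$; $(\bar a\xi)(g)=\hat T_g(a)\xi(g)$; $B(\bar A,V_g)$ is the closed subalgebra of $L(H)$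 generated by $\bar A$ and the $V_g$. Trajectorial representations: for $x\in\Omega$, $\pi_x(a)$ and $\pi_x(T_{g_0})$ are the operators on $l^p(G,E)$ given by $(\pi_x(a)\xi)_g=a(\alpha_g^{-1}(x))\xi_g$ and $(\pi_x(T_{g_0})\xi)_g=\xi_{gg_0}$, $\xi=(\xi_g)_{g\in G}\in l^p(G,E)$ (defined for a.e. $x$ after choosing representatives of the $a_g$). *)

theory Defs
  imports "HOL-Analysis.Analysis" "HOL-Probability.Probability"
begin

definition separable_measure :: "'w measure \<Rightarrow> bool" where
  "separable_measure M \<longleftrightarrow> (\<exists>C. countable C \<and> C \<subseteq> sets M \<and>
     (\<forall>A\<in>sets M. emeasure M A < \<infinity> \<longrightarrow>
        (\<forall>e::real. e > 0 \<longrightarrow> (\<exists>c\<in>C. emeasure M ((A - c) \<union> (c - A)) < ennreal e))))"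

definition enn_root :: "real \<Rightarrow> ennreal \<Rightarrow> ennreal" where
  "enn_root p x = (if x = \<infinity> then \<infinity> else ennreal (enn2real x powr (1 / p)))"

definition Lp_pow :: "'w measure \<Rightarrow> real \<Rightarrow> ('w \<Rightarrow> 'e::real_normed_vector) \<Rightarrow> ennreal" where
  "Lp_pow M p f = (\<integral>\<^sup>+ x. ennreal (norm (f x) powr p) \<partial>M)"

text \<open>D = L^p(Omega, E) (E separable, so strong measurability = Borel measurability).\<close>
definition Dspace :: "'w measure \<Rightarrow> real \<Rightarrow> ('w \<Rightarrow> 'e::real_normed_vector) set" where
  "Dspace M p = {f. f \<in> borel_measurable M \<and> Lp_pow M p f < \<infinity>}"

definition H_pow :: "'w measure \<Rightarrow> real \<Rightarrow> ('g \<Rightarrow> 'w \<Rightarrow> 'e::real_normed_vector) \<Rightarrow> ennreal" where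
  "H_pow M p \<xi> = (\<integral>\<^sup>+ g. Lp_pow M p (\<xi> g) \<partial>count_space UNIV)"

definition Hspace :: "'w measure \<Rightarrow> real \<Rightarrow> ('g \<Rightarrow> 'w \<Rightarrow> 'e::real_normed_vector) set" where
  "Hspace M p = {\<xi>. (\<forall>g. \<xi> g \<in> Dspace M p) \<and> H_pow M p \<xi> < \<infinity>}"

definition H_norm :: "'w measure \<Rightarrow> real \<Rightarrow> ('g \<Rightarrow> 'w \<Rightarrow> 'e::real_normed_vector) \<Rightarrow> ennreal" where
  "H_norm M p \<xi> = enn_root p (H_pow M p \<xi>)"

definition lp_pow :: "real \<Rightarrow> ('g \<Rightarrow> 'e::real_normed_vector) \<Rightarrow> ennreal" where
  "lp_pow p \<eta> = (\<integral>\<^sup>+ g. ennreal (norm (\<eta> g) powr p) \<partial>count_space UNIV)"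

definition lpspace :: "real \<Rightarrow> ('g \<Rightarrow> 'e::real_normed_vector) set" where
  "lpspace p = {\<eta>. lp_pow p \<eta> < \<infinity>}"

definition lp_norm :: "real \<Rightarrow> ('g \<Rightarrow> 'e::real_normed_vector) \<Rightarrow> ennreal" where
  "lp_norm p \<eta> = enn_root p (lp_pow p \<eta>)"

text \<open>Operator norm (in ennreal, so unboundedness gives infinity) of T on the space X with norm N.\<close>
definition op_norm :: "'x set \<Rightarrow> ('x \<Rightarrow> ennreal) \<Rightarrow> ('x \<Rightarrow> 'y) \<Rightarrow> ('y \<Rightarrow> ennreal) \<Rightarrow> ennreal" where
  "op_norm X N T N' = Sup ((\<lambda>\<xi>. N' (T \<xi>)) ` {\<xi>\<in>X. N \<xi> \<le> 1})"

text \<open>A = L^infinity(Omega, L(E)): strongly measurable, essentially bounded operator functions.\<close>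
definition Linf_op :: "'w measure \<Rightarrow> ('w \<Rightarrow> ('e::real_normed_vector \<Rightarrow>\<^sub>L 'e)) set" where
  "Linf_op M = {a. (\<forall>e. (\<lambda>x. blinfun_apply (a x) e) \<in> borel_measurable M) \<and>
                    (\<exists>C. AE x in M. norm (a x) \<le> C)}"

text \<open>hat T_g (a) (x) = a (alpha_g^{-1} x); the group G is written additively.\<close>
definition hatT :: "('g::group_add \<Rightarrow> 'w \<Rightarrow> 'w) \<Rightarrow> 'g \<Rightarrow> ('w \<Rightarrow> 'c) \<Rightarrow> 'w \<Rightarrow> 'c" where
  "hatT \<alpha> g a = (\<lambda>x. a (\<alpha> (- g) x))"

definition bar_op :: "('g::group_add \<Rightarrow> 'w \<Rightarrow> 'w) \<Rightarrow> ('w \<Rightarrow> ('e::real_normed_vector \<Rightarrow>\<^sub>L 'e))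
     \<Rightarrow> ('g \<Rightarrow> 'w \<Rightarrow> 'e) \<Rightarrow> ('g \<Rightarrow> 'w \<Rightarrow> 'e)" where
  "bar_op \<alpha> a \<xi> = (\<lambda>g x. blinfun_apply (hatT \<alpha> g a x) (\<xi> g x))"

definition V_op :: "'g::group_add \<Rightarrow> ('g \<Rightarrow> 'd) \<Rightarrow> ('g \<Rightarrow> 'd)" where
  "V_op g0 \<xi> = (\<lambda>g. \<xi> (g + g0))"

definition reg_b :: "('g::group_add \<Rightarrow> 'w \<Rightarrow> 'w) \<Rightarrow> 'g set \<Rightarrow> ('g \<Rightarrow> 'w \<Rightarrow> ('e::real_normed_vector \<Rightarrow>\<^sub>L 'e))
     \<Rightarrow> ('g \<Rightarrow> 'w \<Rightarrow> 'e) \<Rightarrow> ('g \<Rightarrow> 'w \<Rightarrow> 'e)" where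
  "reg_b \<alpha> F a \<xi> = (\<lambda>g x. \<Sum>h\<in>F. bar_op \<alpha> (a h) (V_op h \<xi>) g x)"

definition pi_a :: "('g::group_add \<Rightarrow> 'w \<Rightarrow> 'w) \<Rightarrow> 'w \<Rightarrow> ('w \<Rightarrow> ('e::real_normed_vector \<Rightarrow>\<^sub>L 'e))
     \<Rightarrow> ('g \<Rightarrow> 'e) \<Rightarrow> ('g \<Rightarrow> 'e)" where
  "pi_a \<alpha> x a \<eta> = (\<lambda>g. blinfun_apply (a (\<alpha> (- g) x)) (\<eta> g))"

definition pi_T :: "'g::group_add \<Rightarrow> ('g \<Rightarrow> 'e) \<Rightarrow> ('g \<Rightarrow> 'e)" where
  "pi_T g0 \<eta> = (\<lambda>g. \<eta> (g + g0))"

definition traj_b :: "('g::group_add \<Rightarrow> 'w \<Rightarrow> 'w) \<Rightarrow> 'g set \<Rightarrow> ('g \<Rightarrow> 'w \<Rightarrow> ('e::real_normed_vector \<Rightarrow>\<^sub>L 'e))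
     \<Rightarrow> 'w \<Rightarrow> ('g \<Rightarrow> 'e) \<Rightarrow> ('g \<Rightarrow> 'e)" where
  "traj_b \<alpha> F a x \<eta> = (\<lambda>g. \<Sum>h\<in>F. pi_a \<alpha> x (a h) (pi_T h \<eta>) g)"

end

theory Submission
  imports Defs
begin

lemma powr_le_iff_pos: fixes x y q :: real assumes "0 \<le> x" "0 \<le> y" "0 < q"
  shows "x powr q \<le> y powr q \<longleftrightarrow> x \<le> y"
  by (meson assms less_le_not_le linorder_le_less_linear powr_less_mono2 powr_mono2)

definition enn_pow :: "real \<Rightarrow> ennreal \<Rightarrow> ennreal" where
  "enn_pow p K = (if K = \<infinity> then \<infinity> else ennreal (enn2real K powr p))"

lemma enn_root_ennreal: "0 \<le> x \<Longrightarrow> enn_root p (ennreal x) = ennreal (x powr (1/p))"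
  by (simp add: enn_root_def)

lemma enn_root_top[simp]: "enn_root p \<infinity> = \<infinity>"
  by (simp add: enn_root_def)

lemma enn_root_top'[simp]: "enn_root p top = top"
  by (simp add: enn_root_def)

lemma enn_pow_ennreal: "0 \<le> x \<Longrightarrow> enn_pow p (ennreal x) = ennreal (x powr p)"
  by (simp add: enn_pow_def)

lemma enn_root_0[simp]: "enn_root p 0 = 0"
  by (simp add: enn_root_def)

lemma enn_root_1[simp]: "enn_root p 1 = 1"
  by (simp add: enn_root_def)

lemma enn_root_eq_0_iff: "enn_root p X = 0 \<longleftrightarrow> X = 0"
  by (cases X) (auto simp: enn_root_def)

lemma enn_root_eq_top_iff: "enn_root p X = \<infinity> \<longleftrightarrow> X = \<infinity>"
  by (cases X) (auto simp: enn_root_def)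

lemma enn_root_le_iff:
  assumes "0 < p" shows "enn_root p X \<le> enn_root p Y \<longleftrightarrow> X \<le> Y"
proof (cases X; cases Y)
  fix x y assume xy: "X = ennreal x" "0 \<le> x" "Y = ennreal y" "0 \<le> y"
  have "x powr (1/p) \<le> y powr (1/p) \<longleftrightarrow> x \<le> y"
    using xy assms by (intro powr_le_iff_pos) auto
  then show ?thesis using xy
    by (simp add: enn_root_def ennreal_le_iff)
qed (auto simp: enn_root_def top_unique)

lemma enn_root_mono: "0 < p \<Longrightarrow> X \<le> Y \<Longrightarrow> enn_root p X \<le> enn_root p Y"
  using enn_root_le_iff by blast

lemma enn_root_less_iff: "0 < p \<Longrightarrow> enn_root p X < enn_root p Y \<longleftrightarrow> X < Y"
  using enn_root_le_iff by (meson not_le)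

lemma enn_root_enn_pow_mult:
  assumes p: "0 < p" shows "enn_root p (enn_pow p K * Y) = K * enn_root p Y"
proof (cases K)
  case (real k)
  show ?thesis
  proof (cases Y)
    case (real y)
    have "(k powr p * y) powr (1/p) = k * y powr (1/p)"
      using \<open>0 \<le> k\<close> \<open>0 \<le> y\<close> p by (simp add: powr_mult powr_powr)
    have e1: "enn_pow p K * Y = ennreal (k powr p * y)"
      using \<open>K = ennreal k\<close> \<open>0 \<le> k\<close> \<open>Y = ennreal y\<close> \<open>0 \<le> y\<close>
      by (simp add: enn_pow_def ennreal_mult)
    have e2: "enn_root p Y = ennreal (y powr (1/p))"
      using \<open>Y = ennreal y\<close> \<open>0 \<le> y\<close> by (simp add: enn_root_def)
    have "enn_root p (enn_pow p K * Y) = ennreal ((k powr p * y) powr (1/p))"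
      unfolding e1 using \<open>0 \<le> k\<close> \<open>0 \<le> y\<close> by (intro enn_root_ennreal) simp
    also have "\<dots> = ennreal (k * y powr (1/p))" using \<open>(k powr p * y) powr (1/p) = k * y powr (1/p)\<close> by simp
    also have "\<dots> = K * enn_root p Y" unfolding e2 \<open>K = ennreal k\<close>
      using \<open>0 \<le> k\<close> by (simp add: ennreal_mult)
    finally show ?thesis .
  next
    case top
    then show ?thesis using real p
      by (cases "k = 0") (auto simp: enn_pow_def enn_root_def ennreal_mult_top)
  qed
next
  case top
  then show ?thesis using p
    by (cases "Y = 0") (auto simp: enn_pow_def enn_root_eq_top_iff enn_root_eq_0_iff ennreal_top_mult)
qed

lemma enn_root_enn_pow: "0 < p \<Longrightarrow> enn_root p (enn_pow p K) = K"
  using enn_root_enn_pow_mult[of p K 1] by simp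

lemma enn_root_le_mult_iff:
  "0 < p \<Longrightarrow> enn_root p X \<le> K * enn_root p Y \<longleftrightarrow> X \<le> enn_pow p K * Y"
  by (metis enn_root_enn_pow_mult enn_root_le_iff)

lemma enn_root_le_iff2:
  "0 < p \<Longrightarrow> enn_root p X \<le> K \<longleftrightarrow> X \<le> enn_pow p K"
  by (metis enn_root_enn_pow enn_root_le_iff)

lemma enn_pow_mono: "0 < p \<Longrightarrow> K \<le> K' \<Longrightarrow> enn_pow p K \<le> enn_pow p K'"
  by (metis enn_root_enn_pow enn_root_le_iff)

lemma lp_pow_scale:
  assumes "0 < p"
  shows "lp_pow p (\<lambda>g. c *\<^sub>R \<eta> g) = enn_pow p (ennreal \<bar>c\<bar>) * lp_pow p \<eta>"
proof -
  have "lp_pow p (\<lambda>g. c *\<^sub>R \<eta> g) =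
      (\<integral>\<^sup>+ g. ennreal (\<bar>c\<bar> powr p) * ennreal (norm (\<eta> g) powr p) \<partial>count_space UNIV)"
    unfolding lp_pow_def by (intro nn_integral_cong) (simp add: powr_mult ennreal_mult)
  also have "\<dots> = ennreal (\<bar>c\<bar> powr p) * lp_pow p \<eta>"
    unfolding lp_pow_def by (rule nn_integral_cmult) simp
  finally show ?thesis by (simp add: enn_pow_ennreal)
qed

lemma lp_norm_scale:
  assumes "0 < p"
  shows "lp_norm p (\<lambda>g. c *\<^sub>R \<eta> g) = ennreal \<bar>c\<bar> * lp_norm p \<eta>"
  unfolding lp_norm_def lp_pow_scale[OF assms] enn_root_enn_pow_mult[OF assms] ..

lemma lp_pow_eq_0:
  assumes "0 < p" shows "lp_pow p \<eta> = 0 \<longleftrightarrow> (\<forall>g. \<eta> g = 0)"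
proof -
  have "lp_pow p \<eta> = 0 \<longleftrightarrow> (AE g in count_space UNIV. ennreal (norm (\<eta> g) powr p) = 0)"
    unfolding lp_pow_def by (rule nn_integral_0_iff_AE) simp
  also have "\<dots> \<longleftrightarrow> (\<forall>g. \<eta> g = 0)"
    using assms by (simp add: AE_count_space)
  finally show ?thesis .
qed

lemma lp_pow_zero[simp]: "lp_pow p (\<lambda>g. 0) = 0"
  by (simp add: lp_pow_def)

lemma lp_norm_zero[simp]: "lp_norm p (\<lambda>g. 0) = 0"
  by (simp add: lp_norm_def)

lemma op_norm_upper:
  "x \<in> X \<Longrightarrow> N x \<le> 1 \<Longrightarrow> N' (T x) \<le> op_norm X N T N'"
  unfolding op_norm_def by (rule Sup_upper) auto

lemma op_norm_least:
  "(\<And>x. x \<in> X \<Longrightarrow> N x \<le> 1 \<Longrightarrow> N' (T x) \<le> C) \<Longrightarrow> op_norm X N T N' \<le> C"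
  unfolding op_norm_def by (rule Sup_least) auto

lemma opnorm_bound:
  fixes T :: "('g \<Rightarrow> 'e::real_normed_vector) \<Rightarrow> ('g \<Rightarrow> 'f::real_normed_vector)"
  assumes p: "0 < p" and hom: "\<And>c \<eta>. T (\<lambda>g. c *\<^sub>R \<eta> g) = (\<lambda>g. c *\<^sub>R T \<eta> g)"
    and eta: "\<eta> \<in> lpspace p"
  shows "lp_norm p (T \<eta>) \<le> op_norm (lpspace p) (lp_norm p) T (lp_norm p) * lp_norm p \<eta>"
proof (cases "lp_pow p \<eta> = 0")
  case True
  then have "\<eta> = (\<lambda>g. 0 *\<^sub>R \<eta> g)" using lp_pow_eq_0[OF p, of \<eta>] by (auto simp: fun_eq_iff)
  then have "T \<eta> = (\<lambda>g. 0)" using hom[of 0 \<eta>] by simp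
  then show ?thesis by simp
next
  case False
  define N where "N = op_norm (lpspace p) (lp_norm p) T (lp_norm p)"
  obtain P where P: "lp_pow p \<eta> = ennreal P" "0 \<le> P"
    using eta unfolding lpspace_def by (cases "lp_pow p \<eta>") auto
  with False have "P > 0" by auto
  define r where "r = P powr (1/p)"
  have r: "r > 0" using \<open>P > 0\<close> by (simp add: r_def)
  have n: "lp_norm p \<eta> = ennreal r"
    unfolding lp_norm_def P(1) r_def using P(2) by (rule enn_root_ennreal)
  define \<eta>' where "\<eta>' = (\<lambda>g. (1/r) *\<^sub>R \<eta> g)"
  have "lp_norm p \<eta>' = ennreal (1/r) * ennreal r"
    unfolding \<eta>'_def lp_norm_scale[OF p] n using r by simp
  also have "\<dots> = 1" using r by (simp add: ennreal_mult[symmetric])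
  finally have n1: "lp_norm p \<eta>' = 1" .
  have "lp_pow p \<eta>' < \<infinity>"
    unfolding \<eta>'_def lp_pow_scale[OF p] P using r P(2)
    by (simp add: enn_pow_ennreal ennreal_mult[symmetric])
  then have "\<eta>' \<in> lpspace p" by (simp add: lpspace_def)
  with n1 have le: "lp_norm p (T \<eta>') \<le> N"
    unfolding N_def by (intro op_norm_upper) auto
  have "\<eta> = (\<lambda>g. r *\<^sub>R \<eta>' g)" using r by (simp add: \<eta>'_def)
  then have "T \<eta> = (\<lambda>g. r *\<^sub>R T \<eta>' g)" using hom by metis
  then have "lp_norm p (T \<eta>) = ennreal r * lp_norm p (T \<eta>')"
    using lp_norm_scale[OF p, of r "T \<eta>'"] r by simp
  also have "\<dots> \<le> ennreal r * N" using le by (rule mult_left_mono) simp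
  finally show ?thesis unfolding N_def n by (simp add: mult.commute)
qed

lemma borel_measurable_blinfun_apply_strong:
  fixes A :: "'w \<Rightarrow> ('e::{banach, second_countable_topology} \<Rightarrow>\<^sub>L 'e)"
  assumes A: "\<And>e. (\<lambda>x. blinfun_apply (A x) e) \<in> borel_measurable M"
    and f: "f \<in> borel_measurable M"
  shows "(\<lambda>x. blinfun_apply (A x) (f x)) \<in> borel_measurable M"
proof -
  obtain F where F: "\<And>i. simple_function M (F i)"
    "\<And>x. x \<in> space M \<Longrightarrow> (\<lambda>i. F i x) \<longlonglongrightarrow> f x"
    using borel_measurable_implies_sequence_metric[OF f, of 0] by blast
  have meas: "(\<lambda>x. blinfun_apply (A x) (F i x)) \<in> borel_measurable M" for i
  proof -
    have "(\<lambda>x. \<Sum>e\<in>F i ` space M. indicator (F i -` {e} \<inter> space M) x *\<^sub>R blinfun_apply (A x) e)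
        \<in> borel_measurable M"
      using simple_functionD(2)[OF F(1)] A
      by (intro borel_measurable_sum borel_measurable_scaleR borel_measurable_indicator) auto
    moreover have "x \<in> space M \<Longrightarrow> (\<Sum>e\<in>F i ` space M. indicator (F i -` {e} \<inter> space M) x *\<^sub>R blinfun_apply (A x) e)
        = blinfun_apply (A x) (F i x)" for x
    proof -
      assume x: "x \<in> space M"
      have "(\<Sum>e\<in>F i ` space M. indicator (F i -` {e} \<inter> space M) x *\<^sub>R blinfun_apply (A x) e)
          = (\<Sum>e\<in>F i ` space M. if e = F i x then blinfun_apply (A x) e else 0)"
        using x by (intro sum.cong) (auto simp: indicator_def)
      also have "\<dots> = blinfun_apply (A x) (F i x)"
        using x simple_functionD(1)[OF F(1)] by (simp add: sum.delta')
      finally show ?thesis .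
    qed
    ultimately show ?thesis by (rule measurable_cong[THEN iffD1, rotated]) simp
  qed
  show ?thesis
    by (rule borel_measurable_LIMSEQ_metric[OF meas]) (auto intro!: tendsto_intros F(2))
qed

lemma borel_measurable_count_space_nn_integral:
  fixes f :: "'i::countable \<Rightarrow> 'w \<Rightarrow> ennreal"
  assumes "\<And>i. f i \<in> borel_measurable M"
  shows "(\<lambda>x. \<integral>\<^sup>+ i. f i x \<partial>count_space UNIV) \<in> borel_measurable M"
proof (cases "finite (UNIV :: 'i set)")
  case True
  then show ?thesis using assms by (simp add: nn_integral_count_space_finite)
next
  case False
  note * = bij_betw_from_nat_into[OF countableI_type False]
  have "(\<lambda>x. \<integral>\<^sup>+ i. f i x \<partial>count_space UNIV) = (\<lambda>x. \<Sum>n. f (from_nat_into UNIV n) x)"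
    by (simp add: nn_integral_bij_count_space[symmetric, OF *] nn_integral_count_space_nat)
  then show ?thesis using assms by simp
qed

lemma traj_hom:
  "traj_b \<alpha> F a x (\<lambda>g. c *\<^sub>R \<eta> g) = (\<lambda>g. c *\<^sub>R traj_b \<alpha> F a x \<eta> g)"
  by (simp add: traj_b_def pi_a_def pi_T_def blinfun.scaleR_right scaleR_sum_right)

lemma reg_traj:
  "reg_b \<alpha> F a \<xi> g x = traj_b \<alpha> F a x (\<lambda>g'. \<xi> g' x) g"
  by (simp add: reg_b_def traj_b_def bar_op_def hatT_def V_op_def pi_a_def pi_T_def)

lemma reg_meas:
  fixes \<alpha> :: "'g::group_add \<Rightarrow> 'w \<Rightarrow> 'w"
    and a :: "'g \<Rightarrow> 'w \<Rightarrow> ('e::{banach, second_countable_topology} \<Rightarrow>\<^sub>L 'e)"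
  assumes "\<And>g. \<alpha> g \<in> measurable M M"
    and "\<And>g. g \<in> F \<Longrightarrow> a g \<in> Linf_op M"
    and "\<And>g. \<xi> g \<in> borel_measurable M"
  shows "(\<lambda>x. reg_b \<alpha> F a \<xi> g x) \<in> borel_measurable M"
proof -
  have "(\<lambda>x. blinfun_apply (a h (\<alpha> (- g) x)) (\<xi> (g + h) x)) \<in> borel_measurable M" if h: "h \<in> F" for h
  proof (rule borel_measurable_blinfun_apply_strong)
    fix e
    have "(\<lambda>y. blinfun_apply (a h y) e) \<in> borel_measurable M"
      using assms(2)[OF h] by (simp add: Linf_op_def)
    then show "(\<lambda>x. blinfun_apply (a h (\<alpha> (- g) x)) e) \<in> borel_measurable M"
      using assms(1) by (rule measurable_compose[rotated])
  qed (rule assms(3))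
  then show ?thesis
    unfolding reg_b_def bar_op_def hatT_def V_op_def by (intro borel_measurable_sum) auto
qed

lemma traj_meas:
  fixes \<alpha> :: "'g::group_add \<Rightarrow> 'w \<Rightarrow> 'w"
    and a :: "'g \<Rightarrow> 'w \<Rightarrow> ('e::{banach, second_countable_topology} \<Rightarrow>\<^sub>L 'e)"
  assumes "\<And>g. \<alpha> g \<in> measurable M M"
    and "\<And>g. g \<in> F \<Longrightarrow> a g \<in> Linf_op M"
  shows "(\<lambda>x. traj_b \<alpha> F a x \<eta> g) \<in> borel_measurable M"
proof -
  have "(\<lambda>x. traj_b \<alpha> F a x \<eta> g) = (\<lambda>x. reg_b \<alpha> F a (\<lambda>g' x. \<eta> g') g x)"
    by (simp add: reg_traj)
  then show ?thesis using reg_meas[OF assms, where \<xi>="\<lambda>g' x. \<eta> g'" and g=g] by simp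
qed

lemma part1:
  fixes M :: "'w measure" and p :: real
    and \<alpha> :: "'g::{group_add, countable} \<Rightarrow> 'w \<Rightarrow> 'w"
    and F :: "'g set"
    and a :: "'g \<Rightarrow> 'w \<Rightarrow> ('e::{banach, second_countable_topology} \<Rightarrow>\<^sub>L 'e)"
  assumes p: "0 < p"
    and meas: "\<And>g. \<alpha> g \<in> measurable M M"
    and aL: "\<And>g. g \<in> F \<Longrightarrow> a g \<in> Linf_op M"
  shows "op_norm (Hspace M p) (H_norm M p) (reg_b \<alpha> F a) (H_norm M p)
       \<le> esssup M (\<lambda>x. op_norm (lpspace p) (lp_norm p) (traj_b \<alpha> F a x) (lp_norm p))"
    (is "_ \<le> ?S")
proof (rule op_norm_least)
  fix \<xi> :: "'g \<Rightarrow> 'w \<Rightarrow> 'e" assume \<xi>H: "\<xi> \<in> Hspace M p" and \<xi>1: "H_norm M p \<xi> \<le> 1"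
  define T where "T x = traj_b \<alpha> F a x" for x
  define nrm where "nrm x = op_norm (lpspace p) (lp_norm p) (T x) (lp_norm p)" for x
  have \<xi>m[measurable]: "\<xi> g \<in> borel_measurable M" for g
    using \<xi>H by (simp add: Hspace_def Dspace_def)
  have Hpow_swap: "H_pow M p \<zeta> = (\<integral>\<^sup>+ x. lp_pow p (\<lambda>g. \<zeta> g x) \<partial>M)"
    if [measurable]: "\<And>g. \<zeta> g \<in> borel_measurable M" for \<zeta> :: "'g \<Rightarrow> 'w \<Rightarrow> 'e"
    unfolding H_pow_def Lp_pow_def lp_pow_def
    by (rule nn_integral_count_space_nn_integral[symmetric]) auto
  have lpm: "(\<lambda>x. lp_pow p (\<lambda>g. \<zeta> g x)) \<in> borel_measurable M"
    if [measurable]: "\<And>g. \<zeta> g \<in> borel_measurable M" for \<zeta> :: "'g \<Rightarrow> 'w \<Rightarrow> 'e"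
    unfolding lp_pow_def by (rule borel_measurable_count_space_nn_integral) simp
  have "H_pow M p \<xi> < \<infinity>" using \<xi>H by (simp add: Hspace_def)
  then have "AE x in M. lp_pow p (\<lambda>g. \<xi> g x) \<noteq> \<infinity>"
    using Hpow_swap[of \<xi>] by (intro nn_integral_noteq_infinite lpm) auto
  moreover have "AE x in M. nrm x \<le> ?S"
    unfolding nrm_def T_def by (rule esssup_AE)
  ultimately have AEle: "AE x in M. lp_pow p (T x (\<lambda>g. \<xi> g x)) \<le> enn_pow p ?S * lp_pow p (\<lambda>g. \<xi> g x)"
  proof eventually_elim
    case (elim x)
    have "lp_norm p (T x (\<lambda>g. \<xi> g x)) \<le> nrm x * lp_norm p (\<lambda>g. \<xi> g x)"
      unfolding nrm_def T_def using p elim(1)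
      by (intro opnorm_bound traj_hom) (auto simp: lpspace_def top.not_eq_extremum)
    also have "\<dots> \<le> ?S * lp_norm p (\<lambda>g. \<xi> g x)"
      using elim(2) by (rule mult_right_mono) simp
    finally show ?case unfolding lp_norm_def by (rule enn_root_le_mult_iff[OF p, THEN iffD1])
  qed
  have regm: "(\<lambda>x. reg_b \<alpha> F a \<xi> g x) \<in> borel_measurable M" for g
    by (rule reg_meas[OF meas aL \<xi>m])
  have "H_pow M p (reg_b \<alpha> F a \<xi>) = (\<integral>\<^sup>+ x. lp_pow p (T x (\<lambda>g. \<xi> g x)) \<partial>M)"
    using Hpow_swap[of "reg_b \<alpha> F a \<xi>", OF regm] by (simp add: reg_traj T_def)
  also have "\<dots> \<le> (\<integral>\<^sup>+ x. enn_pow p ?S * lp_pow p (\<lambda>g. \<xi> g x) \<partial>M)"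
    by (rule nn_integral_mono_AE[OF AEle])
  also have "\<dots> = enn_pow p ?S * H_pow M p \<xi>"
    by (simp add: nn_integral_cmult lpm Hpow_swap)
  finally have "H_norm M p (reg_b \<alpha> F a \<xi>) \<le> ?S * H_norm M p \<xi>"
    unfolding H_norm_def by (rule enn_root_le_mult_iff[OF p, THEN iffD2])
  also have "\<dots> \<le> ?S * 1" using \<xi>1 by (rule mult_left_mono) simp
  finally show "H_norm M p (reg_b \<alpha> F a \<xi>) \<le> ?S" by simp
qed

lemma Hpow_swap:
  fixes \<zeta> :: "'g::countable \<Rightarrow> 'w \<Rightarrow> 'e::real_normed_vector"
  assumes [measurable]: "\<And>g. \<zeta> g \<in> borel_measurable M"
  shows "H_pow M p \<zeta> = (\<integral>\<^sup>+ x. lp_pow p (\<lambda>g. \<zeta> g x) \<partial>M)"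
    unfolding H_pow_def Lp_pow_def lp_pow_def
    by (rule nn_integral_count_space_nn_integral[symmetric]) auto

lemma lp_pow_meas:
  fixes \<zeta> :: "'g::countable \<Rightarrow> 'w \<Rightarrow> 'e::real_normed_vector"
  assumes [measurable]: "\<And>g. \<zeta> g \<in> borel_measurable M"
  shows "(\<lambda>x. lp_pow p (\<lambda>g. \<zeta> g x)) \<in> borel_measurable M"
    unfolding lp_pow_def by (rule borel_measurable_count_space_nn_integral) simp

lemma ennreal_div_le_imp:
  fixes a b K :: ennreal
  assumes "b \<noteq> 0" "b \<noteq> top" "a / b \<le> K"
  shows "a \<le> K * b"
proof -
  have "a = (a * b) / b" using assms by (simp add: ennreal_mult_divide_eq)
  also have "\<dots> = (a / b) * b" by (metis ennreal_times_divide mult.commute)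
  also have "\<dots> \<le> K * b" using assms(3) by (rule mult_right_mono) simp
  finally show ?thesis .
qed

lemma lp_pow_finite_support:
  assumes "finite P" "\<And>g. g \<notin> P \<Longrightarrow> \<eta> g = 0"
  shows "lp_pow p \<eta> = ennreal (\<Sum>g\<in>P. norm (\<eta> g) powr p)"
proof -
  have "lp_pow p \<eta> = (\<Sum>g\<in>P. ennreal (norm (\<eta> g) powr p))"
    unfolding lp_pow_def using assms by (intro nn_integral_count_space') auto
  then show ?thesis by simp
qed

lemma lp_pow_ge_finite_sum:
  assumes "finite J"
  shows "(\<Sum>g\<in>J. ennreal (norm (\<eta> g) powr p)) \<le> lp_pow p \<eta>"
proof -
  have "(\<Sum>g\<in>J. ennreal (norm (\<eta> g) powr p))
      = (\<integral>\<^sup>+ g. (if g \<in> J then ennreal (norm (\<eta> g) powr p) else 0) \<partial>count_space UNIV)"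
    using assms by (subst nn_integral_count_space'[of J]) auto
  also have "\<dots> \<le> lp_pow p \<eta>"
    unfolding lp_pow_def by (intro nn_integral_mono) auto
  finally show ?thesis .
qed

lemma count_space_le_finite_sums:
  fixes f :: "'g::countable \<Rightarrow> ennreal"
  assumes "\<And>J. finite J \<Longrightarrow> sum f J \<le> C"
  shows "(\<integral>\<^sup>+ g. f g \<partial>count_space UNIV) \<le> C"
proof (cases "finite (UNIV :: 'g set)")
  case True
  then show ?thesis using assms by (simp add: nn_integral_count_space_finite)
next
  case False
  note * = bij_betw_from_nat_into[OF countableI_type False]
  define e where "e = from_nat_into (UNIV :: 'g set)"
  have inj: "inj e" using * unfolding e_def by (simp add: bij_betw_def)
  have "(\<integral>\<^sup>+ g. f g \<partial>count_space UNIV) = (\<Sum>n. f (e n))"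
    unfolding e_def by (simp add: nn_integral_bij_count_space[symmetric, OF *] nn_integral_count_space_nat)
  also have "\<dots> = (SUP n. \<Sum>i<n. f (e i))" by (rule suminf_eq_SUP)
  also have "\<dots> \<le> C"
  proof (rule SUP_least)
    fix n
    have "(\<Sum>i<n. f (e i)) = sum f (e ` {..<n})"
      using inj by (simp add: sum.reindex inj_on_def inj_def)
    also have "\<dots> \<le> C" by (rule assms) simp
    finally show "(\<Sum>i<n. f (e i)) \<le> C" .
  qed
  finally show ?thesis .
qed

lemma enn_root_meas[measurable]:
  assumes [measurable]: "f \<in> borel_measurable M"
  shows "(\<lambda>x. enn_root p (f x)) \<in> borel_measurable M"
  unfolding enn_root_def by measurable


definition finD :: "'e::zero set \<Rightarrow> ('g \<Rightarrow> 'e) set" where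
  "finD Q = (\<lambda>xs. (\<lambda>g. case map_of xs g of None \<Rightarrow> 0 | Some q \<Rightarrow> q)) ` lists (UNIV \<times> Q)"

lemma countable_finD:
  assumes "countable Q" shows "countable (finD Q :: ('g::countable \<Rightarrow> 'e::zero) set)"
proof -
  have "countable (UNIV \<times> Q :: ('g \<times> 'e) set)"
    using assms by (intro countable_SIGMA) auto
  then show ?thesis unfolding finD_def by (intro countable_image countable_lists)
qed

lemma finD_memI:
  assumes "finite P" "\<And>g. g \<in> P \<Longrightarrow> f g \<in> Q"
  shows "(\<lambda>g. if g \<in> P then f g else 0) \<in> finD Q"
proof -
  obtain xs where xs: "set xs = P" using finite_list[OF assms(1)] by blast
  have "zip xs (map f xs) \<in> lists (UNIV \<times> Q)"
    using assms(2) xs by (fastforce simp: set_zip)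
  moreover have "(\<lambda>g. if g \<in> P then f g else 0) =
      (\<lambda>g. case map_of (zip xs (map f xs)) g of None \<Rightarrow> 0 | Some q \<Rightarrow> q)"
    using xs by (simp add: map_of_zip_map fun_eq_iff)
  ultimately show ?thesis unfolding finD_def by blast
qed

lemma finD_support:
  assumes "\<eta> \<in> finD Q"
  obtains P where "finite P" "\<And>g. g \<notin> P \<Longrightarrow> \<eta> g = 0"
proof -
  obtain xs where eq: "\<eta> = (\<lambda>g. case map_of xs g of None \<Rightarrow> 0 | Some q \<Rightarrow> q)"
    using assms unfolding finD_def by blast
  have "\<eta> g = 0" if "g \<notin> fst ` set xs" for g
  proof -
    have "map_of xs g = None" using that by (simp add: map_of_eq_None_iff)
    then show ?thesis using eq by simp
  qed
  then show ?thesis using that by blast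
qed

lemma dense_approx:
  fixes e :: "'a::real_normed_vector"
  assumes "\<And>X. open X \<Longrightarrow> X \<noteq> {} \<Longrightarrow> \<exists>d\<in>Q. d \<in> X"
  shows "\<exists>s. (\<forall>n. s n \<in> Q) \<and> s \<longlonglongrightarrow> e"
proof -
  have "\<forall>n. \<exists>d. d \<in> Q \<and> d \<in> ball e (1 / Suc n)"
  proof
    fix n
    have "\<exists>d\<in>Q. d \<in> ball e (1 / Suc n)" by (rule assms) auto
    then show "\<exists>d. d \<in> Q \<and> d \<in> ball e (1 / Suc n)" by (simp add: Bex_def)
  qed
  then obtain s where s0: "\<forall>n. s n \<in> Q \<and> s n \<in> ball e (1 / Suc n)"
    by (rule choice[THEN exE])
  have "(\<lambda>n. s n - e) \<longlonglongrightarrow> 0"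
  proof (rule Lim_null_comparison)
    show "\<forall>\<^sub>F n in sequentially. norm (s n - e) \<le> 1 / Suc n"
    proof (rule always_eventually, rule allI)
      fix n
      have "dist e (s n) < 1 / Suc n" using s0 by simp
      then show "norm (s n - e) \<le> 1 / Suc n" by (simp add: dist_norm norm_minus_commute)
    qed
    show "(\<lambda>n. 1 / real (Suc n)) \<longlonglongrightarrow> 0"
      using LIMSEQ_inverse_real_of_nat by (simp add: inverse_eq_divide)
  qed
  then have "s \<longlonglongrightarrow> e" by (simp add: Lim_null[symmetric])
  with s0 show ?thesis by blast
qed


lemma traj_apply:
  "traj_b \<alpha> F a x \<eta> g = (\<Sum>h\<in>F. blinfun_apply (a h (\<alpha> (- g) x)) (\<eta> (g + h)))"
  by (simp add: traj_b_def pi_a_def pi_T_def)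

lemma traj_zero:
  "traj_b \<alpha> F a x (\<lambda>g. 0) = (\<lambda>g. 0)"
  by (simp add: traj_b_def pi_a_def pi_T_def fun_eq_iff)

lemma lp_pow_zero_iff_fun: "0 < p \<Longrightarrow> lp_pow p \<eta> = 0 \<Longrightarrow> \<eta> = (\<lambda>g. 0)"
  using lp_pow_eq_0[of p \<eta>] by (auto simp: fun_eq_iff)

lemma lp_norm_eq_0_iff: "lp_norm p \<eta> = 0 \<longleftrightarrow> lp_pow p \<eta> = 0"
  by (simp add: lp_norm_def enn_root_eq_0_iff)

lemma nrm_eq_SUP:
  fixes \<alpha> :: "'g::{group_add, countable} \<Rightarrow> 'w \<Rightarrow> 'w"
    and a :: "'g \<Rightarrow> 'w \<Rightarrow> ('e::{banach, second_countable_topology} \<Rightarrow>\<^sub>L 'e)"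
  assumes p: "0 < p" and fin: "finite F"
    and Q: "\<And>X. open X \<Longrightarrow> X \<noteq> {} \<Longrightarrow> \<exists>d\<in>Q. d \<in> X"
  shows "op_norm (lpspace p) (lp_norm p) (traj_b \<alpha> F a x) (lp_norm p)
       = (SUP \<eta>\<in>finD Q. lp_norm p (traj_b \<alpha> F a x \<eta>) / lp_norm p \<eta>)"
    (is "?N = ?K")
proof (rule antisym)
  define T where "T = traj_b \<alpha> F a x"
  show "?K \<le> ?N"
  proof (rule SUP_least)
    fix \<eta> :: "'g \<Rightarrow> 'e" assume \<eta>D: "\<eta> \<in> finD Q"
    obtain P where P: "finite P" "\<And>g. g \<notin> P \<Longrightarrow> \<eta> g = 0"
      using finD_support[OF \<eta>D] by blast
    have "\<eta> \<in> lpspace p"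
      using lp_pow_finite_support[OF P] by (simp add: lpspace_def)
    show "lp_norm p (traj_b \<alpha> F a x \<eta>) / lp_norm p \<eta> \<le> ?N"
    proof (cases "lp_pow p \<eta> = 0")
      case True
      then have "\<eta> = (\<lambda>g. 0)" by (rule lp_pow_zero_iff_fun[OF p])
      then show ?thesis by (simp add: traj_zero)
    next
      case False
      then have "lp_norm p \<eta> > 0" by (simp add: lp_norm_eq_0_iff zero_less_iff_neq_zero)
      moreover have "lp_norm p (traj_b \<alpha> F a x \<eta>) \<le> ?N * lp_norm p \<eta>"
        using p \<open>\<eta> \<in> lpspace p\<close> by (intro opnorm_bound traj_hom)
      ultimately show ?thesis
        by (intro divide_le_posI_ennreal) (simp_all add: mult.commute)
    qed
  qed
  show "?N \<le> ?K"
  proof (rule op_norm_least)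
    fix \<eta> :: "'g \<Rightarrow> 'e" assume \<eta>: "\<eta> \<in> lpspace p" "lp_norm p \<eta> \<le> 1"
    show "lp_norm p (traj_b \<alpha> F a x \<eta>) \<le> ?K"
    proof (cases "?K = top")
      case True then show ?thesis by (simp only: top_greatest)
    next
      case False
      then obtain k where k: "?K = ennreal k" "0 \<le> k" by (cases ?K) auto
      have epK: "enn_pow p ?K = ennreal (k powr p)" using k by (simp add: enn_pow_ennreal)
      have main: "lp_pow p (T \<eta>) \<le> ennreal (k powr p) * lp_pow p \<eta>"
        unfolding lp_pow_def[of p "T \<eta>"]
      proof (rule count_space_le_finite_sums)
        fix J :: "'g set" assume J: "finite J"
        define P where "P = (\<lambda>(g, h). g + h) ` (J \<times> F)"
        have finP: "finite P" using J fin by (simp add: P_def)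
        have "\<forall>q. \<exists>s. (\<forall>n. s n \<in> Q) \<and> s \<longlonglongrightarrow> \<eta> q"
          using Q by (intro allI dense_approx) auto
        then obtain S where S: "\<And>q n. S q n \<in> Q" "\<And>q. S q \<longlonglongrightarrow> \<eta> q"
          by (metis choice)
        define \<eta>n where "\<eta>n n = (\<lambda>q. if q \<in> P then S q n else 0)" for n
        have \<eta>nD: "\<eta>n n \<in> finD Q" for n
          unfolding \<eta>n_def using finP S(1) by (rule finD_memI)
        have pow\<eta>n: "lp_pow p (\<eta>n n) = ennreal (\<Sum>q\<in>P. norm (S q n) powr p)" for n
        proof -
          have "lp_pow p (\<eta>n n) = ennreal (\<Sum>q\<in>P. norm (\<eta>n n q) powr p)"
            by (rule lp_pow_finite_support[OF finP]) (simp add: \<eta>n_def)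
          also have "(\<Sum>q\<in>P. norm (\<eta>n n q) powr p) = (\<Sum>q\<in>P. norm (S q n) powr p)"
            by (intro sum.cong) (auto simp: \<eta>n_def)
          finally show ?thesis .
        qed
        have fact2: "lp_pow p (T (\<eta>n n)) \<le> ennreal (k powr p) * lp_pow p (\<eta>n n)" for n
        proof (cases "lp_pow p (\<eta>n n) = 0")
          case True
          then have "\<eta>n n = (\<lambda>g. 0)" by (rule lp_pow_zero_iff_fun[OF p])
          then show ?thesis by (simp add: T_def traj_zero)
        next
          case False
          have "lp_norm p (T (\<eta>n n)) / lp_norm p (\<eta>n n) \<le> ?K"
            unfolding T_def using \<eta>nD by (intro SUP_upper)
          moreover have "lp_norm p (\<eta>n n) \<noteq> 0" using False by (simp add: lp_norm_eq_0_iff)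
          moreover have "lp_norm p (\<eta>n n) \<noteq> top"
            by (simp add: lp_norm_def pow\<eta>n enn_root_def)
          ultimately have "lp_norm p (T (\<eta>n n)) \<le> ?K * lp_norm p (\<eta>n n)"
            by (intro ennreal_div_le_imp)
          then have "lp_pow p (T (\<eta>n n)) \<le> enn_pow p ?K * lp_pow p (\<eta>n n)"
            unfolding lp_norm_def by (rule enn_root_le_mult_iff[OF p, THEN iffD1])
          then show ?thesis by (simp only: epK)
        qed
        have fact3: "(\<Sum>g\<in>J. norm (T (\<eta>n n) g) powr p) \<le> k powr p * (\<Sum>q\<in>P. norm (S q n) powr p)" for n
        proof -
          have "ennreal (\<Sum>g\<in>J. norm (T (\<eta>n n) g) powr p) = (\<Sum>g\<in>J. ennreal (norm (T (\<eta>n n) g) powr p))"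
            by simp
          also have "\<dots> \<le> lp_pow p (T (\<eta>n n))" by (rule lp_pow_ge_finite_sum[OF J])
          also have "\<dots> \<le> ennreal (k powr p) * lp_pow p (\<eta>n n)" by (rule fact2)
          also have "\<dots> = ennreal (k powr p * (\<Sum>q\<in>P. norm (S q n) powr p))"
            by (simp add: pow\<eta>n ennreal_mult sum_nonneg)
          finally show ?thesis by (simp add: ennreal_le_iff sum_nonneg)
        qed
        have limT: "(\<lambda>n. T (\<eta>n n) g) \<longlonglongrightarrow> T \<eta> g" if g: "g \<in> J" for g
        proof -
          have "T (\<eta>n n) g = (\<Sum>h\<in>F. blinfun_apply (a h (\<alpha> (- g) x)) (S (g + h) n))" for n
            unfolding T_def traj_apply using g
            by (intro sum.cong) (auto simp: \<eta>n_def P_def)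
          moreover have "(\<lambda>n. \<Sum>h\<in>F. blinfun_apply (a h (\<alpha> (- g) x)) (S (g + h) n))
              \<longlonglongrightarrow> (\<Sum>h\<in>F. blinfun_apply (a h (\<alpha> (- g) x)) (\<eta> (g + h)))"
            by (intro tendsto_sum tendsto_intros S(2))
          ultimately show ?thesis by (simp add: T_def traj_apply)
        qed
        have lim1: "(\<lambda>n. \<Sum>g\<in>J. norm (T (\<eta>n n) g) powr p) \<longlonglongrightarrow> (\<Sum>g\<in>J. norm (T \<eta> g) powr p)"
          using p by (intro tendsto_sum tendsto_powr' tendsto_norm limT) auto
        have lim2: "(\<lambda>n. k powr p * (\<Sum>q\<in>P. norm (S q n) powr p)) \<longlonglongrightarrow> k powr p * (\<Sum>q\<in>P. norm (\<eta> q) powr p)"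
          using p by (intro tendsto_mult tendsto_const tendsto_sum tendsto_powr' tendsto_norm S(2)) auto
        have real_le: "(\<Sum>g\<in>J. norm (T \<eta> g) powr p) \<le> k powr p * (\<Sum>q\<in>P. norm (\<eta> q) powr p)"
          by (rule tendsto_le[OF trivial_limit_sequentially lim2 lim1]) (simp add: fact3)
        have "(\<Sum>g\<in>J. ennreal (norm (T \<eta> g) powr p)) = ennreal (\<Sum>g\<in>J. norm (T \<eta> g) powr p)"
          by simp
        also have "\<dots> \<le> ennreal (k powr p * (\<Sum>q\<in>P. norm (\<eta> q) powr p))"
          using real_le by (rule ennreal_leI)
        also have "\<dots> = ennreal (k powr p) * (\<Sum>q\<in>P. ennreal (norm (\<eta> q) powr p))"
          by (simp add: ennreal_mult sum_nonneg)
        also have "\<dots> \<le> ennreal (k powr p) * lp_pow p \<eta>"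
          by (intro mult_left_mono lp_pow_ge_finite_sum finP) simp
        finally show "(\<Sum>g\<in>J. ennreal (norm (T \<eta> g) powr p)) \<le> ennreal (k powr p) * lp_pow p \<eta>" .
      qed
      have "lp_pow p (T \<eta>) \<le> enn_pow p ?K * lp_pow p \<eta>"
        using main by (simp only: epK)
      then have "lp_norm p (T \<eta>) \<le> ?K * lp_norm p \<eta>"
        unfolding lp_norm_def by (rule enn_root_le_mult_iff[OF p, THEN iffD2])
      also have "\<dots> \<le> ?K * 1" using \<eta>(2) by (rule mult_left_mono) simp
      finally show ?thesis by (simp add: T_def)
    qed
  qed
qed

lemma enn_pow_zero[simp]: "enn_pow p 0 = 0"
  by (simp add: enn_pow_def)

lemma le_count_space_integral:
  fixes f :: "'g \<Rightarrow> ennreal"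
  shows "f g \<le> (\<integral>\<^sup>+ g'. f g' \<partial>count_space UNIV)"
proof -
  have "f g = (\<integral>\<^sup>+ g'. (if g' = g then f g' else 0) \<partial>count_space UNIV)"
    by (subst nn_integral_count_space'[of "{g}"]) auto
  also have "\<dots> \<le> (\<integral>\<^sup>+ g'. f g' \<partial>count_space UNIV)"
    by (intro nn_integral_mono) auto
  finally show ?thesis .
qed

lemma ae_bound:
  fixes M :: "'w measure" and p :: real
    and \<alpha> :: "'g::{group_add, countable} \<Rightarrow> 'w \<Rightarrow> 'w"
    and F :: "'g set"
    and a :: "'g \<Rightarrow> 'w \<Rightarrow> ('e::{banach, second_countable_topology} \<Rightarrow>\<^sub>L 'e)"
  assumes sf: "sigma_finite_measure M" and p: "0 < p"
    and meas: "\<And>g. \<alpha> g \<in> measurable M M"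
    and aL: "\<And>g. g \<in> F \<Longrightarrow> a g \<in> Linf_op M"
    and \<eta>fin: "lp_pow p \<eta> < \<infinity>"
  shows "AE x in M. lp_norm p (traj_b \<alpha> F a x \<eta>) / lp_norm p \<eta>
       \<le> op_norm (Hspace M p) (H_norm M p) (reg_b \<alpha> F a) (H_norm M p)"
    (is "AE x in M. _ \<le> ?L")
proof (cases "lp_pow p \<eta> = 0")
  case True
  then have "\<eta> = (\<lambda>g. 0)" by (rule lp_pow_zero_iff_fun[OF p])
  then show ?thesis by (simp add: traj_zero)
next
  case False
  show ?thesis
  proof (cases "?L = top")
    case True then show ?thesis by (simp only: top_greatest AE_I2)
  next
    case False
    then obtain l where l: "?L = ennreal l" "0 \<le> l" by (cases ?L) auto
    obtain P0 where P0: "lp_pow p \<eta> = ennreal P0" "0 \<le> P0"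
      using \<eta>fin by (cases "lp_pow p \<eta>") auto
    with \<open>lp_pow p \<eta> \<noteq> 0\<close> have P0pos: "P0 > 0" by auto
    define T where "T x = traj_b \<alpha> F a x" for x
    define f where "f x = lp_pow p (T x \<eta>)" for x
    have fm[measurable]: "f \<in> borel_measurable M"
      unfolding f_def T_def
      by (rule lp_pow_meas[where \<zeta>="\<lambda>g x. traj_b \<alpha> F a x \<eta> g"]) (rule traj_meas[OF meas aL])
    define c0 where "c0 = l powr p * P0"
    have c0: "c0 \<ge> 0" using P0 by (simp add: c0_def)
    have AEf: "AE x in M. f x \<le> ennreal c0"
    proof (rule ccontr)
      assume notAE: "\<not> (AE x in M. f x \<le> ennreal c0)"
      define B where "B k = {x \<in> space M. ennreal (c0 + inverse (real (Suc k))) < f x}" for k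
      have Bm[measurable]: "B k \<in> sets M" for k unfolding B_def by measurable
      have "\<exists>k. B k \<notin> null_sets M"
      proof (rule ccontr)
        assume "\<not> (\<exists>k. B k \<notin> null_sets M)"
        then have "(\<Union>k. B k) \<in> null_sets M" by auto
        moreover have "{x \<in> space M. \<not> f x \<le> ennreal c0} \<subseteq> (\<Union>k. B k)"
        proof
          fix x assume x: "x \<in> {x \<in> space M. \<not> f x \<le> ennreal c0}"
          then have lt: "ennreal c0 < f x" by (simp add: not_le)
          show "x \<in> (\<Union>k. B k)"
          proof (cases "f x")
            case (real y)
            with lt c0 have "c0 < y" by (simp add: ennreal_less_iff)
            then obtain k where "inverse (real (Suc k)) < y - c0"
              using reals_Archimedean[of "y - c0"] by auto
            then have "ennreal (c0 + inverse (real (Suc k))) < f x"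
              unfolding \<open>f x = ennreal y\<close> using c0 by (subst ennreal_less_iff) auto
            then show ?thesis using x by (auto simp: B_def)
          next
            case top
            then have "ennreal (c0 + inverse (real (Suc 0))) < f x" by simp
            then have "x \<in> B 0" using x by (simp add: B_def)
            then show ?thesis by blast
          qed
        qed
        ultimately have "AE x in M. f x \<le> ennreal c0" by (rule AE_I')
        with notAE show False by simp
      qed
      then obtain k where "B k \<notin> null_sets M" by blast
      then have Bk: "emeasure M (B k) \<noteq> 0" using Bm[of k] by (simp add: null_sets_def)
      define \<delta> where "\<delta> = inverse (real (Suc k))"
      have \<delta>: "\<delta> > 0" by (simp add: \<delta>_def)
      obtain S where S: "S \<in> sets M" "S \<subseteq> B k" "emeasure M S < \<infinity>" "emeasure M S > 0"
      proof (cases "emeasure M (B k) = \<infinity>")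
        case True
        then show ?thesis
          using sigma_finite_measure.approx_PInf_emeasure_with_finite[OF sf Bm True, of 0] that
          by auto
      next
        case False
        then show ?thesis using that[of "B k"] Bk by (auto simp: top.not_eq_extremum zero_less_iff_neq_zero)
      qed
      define m where "m = measure M S"
      have Sm: "emeasure M S = ennreal m" using S(3) by (simp add: m_def emeasure_eq_ennreal_measure)
      have mpos: "m > 0" using S(4) Sm by (simp add: ennreal_less_iff m_def)
      define c where "c = (1 / (m * P0)) powr (1 / p)"
      have cpos: "c > 0" using mpos P0pos by (simp add: c_def)
      have cp: "c powr p = 1 / (m * P0)"
        using mpos P0pos p by (simp add: c_def powr_powr)
      define \<xi> where "\<xi> g x = (c * indicator S x) *\<^sub>R \<eta> g" for g x
      have \<xi>m: "\<xi> g \<in> borel_measurable M" for g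
        unfolding \<xi>_def using S(1) by measurable
      have lpx: "lp_pow p (\<lambda>g. \<xi> g x) = ennreal (c powr p * P0) * indicator S x" for x
      proof -
        have "lp_pow p (\<lambda>g. \<xi> g x) = enn_pow p (ennreal \<bar>c * indicator S x\<bar>) * lp_pow p \<eta>"
          unfolding \<xi>_def by (rule lp_pow_scale[OF p])
        then show ?thesis
          using cpos P0 by (cases "x \<in> S") (simp_all add: enn_pow_ennreal ennreal_mult)
      qed
      have Hpow: "H_pow M p \<xi> = 1"
      proof -
        have "H_pow M p \<xi> = (\<integral>\<^sup>+ x. ennreal (c powr p * P0) * indicator S x \<partial>M)"
          using Hpow_swap[of \<xi>, OF \<xi>m] by (simp add: lpx)
        also have "\<dots> = ennreal (c powr p * P0) * emeasure M S"
          using S(1) by (rule nn_integral_cmult_indicator)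
        also have "\<dots> = ennreal (c powr p * P0 * m)"
          using Sm cpos P0 mpos by (simp add: ennreal_mult)
        also have "c powr p * P0 * m = 1" using cp mpos P0pos by simp
        finally show ?thesis by simp
      qed
      have \<xi>H: "\<xi> \<in> Hspace M p"
      proof -
        have "Lp_pow M p (\<xi> g) < \<infinity>" for g
        proof -
          have "Lp_pow M p (\<xi> g) \<le> H_pow M p \<xi>"
            unfolding H_pow_def by (rule le_count_space_integral)
          then show ?thesis using Hpow by (simp add: le_less_trans)
        qed
        then show ?thesis using \<xi>m Hpow by (simp add: Hspace_def Dspace_def)
      qed
      have "H_norm M p \<xi> = 1" by (simp add: H_norm_def Hpow)
      then have "H_norm M p (reg_b \<alpha> F a \<xi>) \<le> ?L"
        using \<xi>H by (intro op_norm_upper) auto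
      then have up: "H_pow M p (reg_b \<alpha> F a \<xi>) \<le> ennreal (l powr p)"
        unfolding H_norm_def l(1) using enn_root_le_iff2[OF p] l(2) by (simp add: enn_pow_ennreal)
      have regm: "(\<lambda>x. reg_b \<alpha> F a \<xi> g x) \<in> borel_measurable M" for g
        by (rule reg_meas[OF meas aL \<xi>m])
      have "ennreal (c powr p * (c0 + \<delta>)) * emeasure M S
          = (\<integral>\<^sup>+ x. ennreal (c powr p * (c0 + \<delta>)) * indicator S x \<partial>M)"
        using S(1) by (rule nn_integral_cmult_indicator[symmetric])
      also have "\<dots> \<le> (\<integral>\<^sup>+ x. lp_pow p (T x (\<lambda>g. \<xi> g x)) \<partial>M)"
      proof (intro nn_integral_mono)
        fix x assume "x \<in> space M"
        have eq: "lp_pow p (T x (\<lambda>g. \<xi> g x)) = ennreal (c powr p) * f x * indicator S x"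
        proof -
          have "T x (\<lambda>g. \<xi> g x) = (\<lambda>g. (c * indicator S x) *\<^sub>R T x \<eta> g)"
            unfolding \<xi>_def T_def by (rule traj_hom)
          then have "lp_pow p (T x (\<lambda>g. \<xi> g x)) = enn_pow p (ennreal \<bar>c * indicator S x\<bar>) * f x"
            unfolding f_def by (simp add: lp_pow_scale[OF p])
          then show ?thesis
            using cpos by (cases "x \<in> S") (simp_all add: enn_pow_ennreal)
        qed
        show "ennreal (c powr p * (c0 + \<delta>)) * indicator S x \<le> lp_pow p (T x (\<lambda>g. \<xi> g x))"
        proof (cases "x \<in> S")
          case True
          then have "ennreal (c0 + \<delta>) < f x" using S(2) by (auto simp: B_def \<delta>_def)
          then have "ennreal (c powr p) * ennreal (c0 + \<delta>) \<le> ennreal (c powr p) * f x"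
            by (intro mult_left_mono) auto
          then show ?thesis using True eq c0 \<delta> by (simp add: ennreal_mult)
        qed simp
      qed
      also have "\<dots> = H_pow M p (reg_b \<alpha> F a \<xi>)"
        using Hpow_swap[of "reg_b \<alpha> F a \<xi>", OF regm] by (simp add: reg_traj T_def)
      also have "\<dots> \<le> ennreal (l powr p)" by (rule up)
      finally have "ennreal (c powr p * (c0 + \<delta>) * m) \<le> ennreal (l powr p)"
        using Sm cpos c0 \<delta> mpos by (simp add: ennreal_mult)
      then have "c powr p * (c0 + \<delta>) * m \<le> l powr p"
        by (simp add: ennreal_le_iff)
      also have "c powr p * (c0 + \<delta>) * m = l powr p + \<delta> / P0"
      proof -
        have cm: "c powr p * m = 1 / P0" using cp mpos P0pos by (simp add: field_simps)
        have "c powr p * (c0 + \<delta>) * m = (c powr p * m) * (c0 + \<delta>)" by (simp add: algebra_simps)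
        also have "\<dots> = (c0 + \<delta>) / P0" using cm by simp
        also have "\<dots> = l powr p + \<delta> / P0" using P0pos by (simp add: c0_def add_divide_distrib)
        finally show ?thesis .
      qed
      finally show False using \<delta> P0pos by (simp add: field_simps)
    qed
    show ?thesis using AEf
    proof eventually_elim
      case (elim x)
      have "lp_pow p (T x \<eta>) \<le> enn_pow p ?L * lp_pow p \<eta>"
        using elim l P0 by (simp add: f_def c0_def enn_pow_ennreal ennreal_mult)
      then have "lp_norm p (T x \<eta>) \<le> ?L * lp_norm p \<eta>"
        unfolding lp_norm_def by (rule enn_root_le_mult_iff[OF p, THEN iffD2])
      moreover have "lp_norm p \<eta> > 0"
        using \<open>lp_pow p \<eta> \<noteq> 0\<close> by (simp add: lp_norm_eq_0_iff zero_less_iff_neq_zero)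
      ultimately show ?case
        unfolding T_def by (intro divide_le_posI_ennreal) (simp_all add: mult.commute)
    qed
  qed
qed



lemma part2:
  fixes M :: "'w measure" and p :: real
    and \<alpha> :: "'g::{group_add, countable} \<Rightarrow> 'w \<Rightarrow> 'w"
    and F :: "'g set"
    and a :: "'g \<Rightarrow> 'w \<Rightarrow> ('e::{banach, second_countable_topology} \<Rightarrow>\<^sub>L 'e)"
  assumes sf: "sigma_finite_measure M" and p: "0 < p"
    and meas: "\<And>g. \<alpha> g \<in> measurable M M"
    and aL: "\<And>g. g \<in> F \<Longrightarrow> a g \<in> Linf_op M"
    and fin: "finite F"
  shows "esssup M (\<lambda>x. op_norm (lpspace p) (lp_norm p) (traj_b \<alpha> F a x) (lp_norm p))
       \<le> op_norm (Hspace M p) (H_norm M p) (reg_b \<alpha> F a) (H_norm M p)"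
    (is "_ \<le> ?L")
proof -
  obtain Q :: "'e set" where Q: "countable Q" "\<And>X. open X \<Longrightarrow> X \<noteq> {} \<Longrightarrow> \<exists>d\<in>Q. d \<in> X"
    using countable_dense_exists by blast
  define nrm' where "nrm' x = (SUP \<eta>\<in>finD Q. lp_norm p (traj_b \<alpha> F a x \<eta>) / lp_norm p \<eta>)" for x
  have eq: "(\<lambda>x. op_norm (lpspace p) (lp_norm p) (traj_b \<alpha> F a x) (lp_norm p)) = nrm'"
    unfolding nrm'_def by (rule ext, rule nrm_eq_SUP[OF p fin Q(2)])
  have cD: "countable (finD Q :: ('g \<Rightarrow> 'e) set)" by (rule countable_finD[OF Q(1)])
  have each: "(\<lambda>x. lp_norm p (traj_b \<alpha> F a x \<eta>) / lp_norm p \<eta>) \<in> borel_measurable M" for \<eta>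
  proof -
    have "(\<lambda>x. lp_pow p (\<lambda>g. traj_b \<alpha> F a x \<eta> g)) \<in> borel_measurable M"
      by (rule lp_pow_meas[where \<zeta>="\<lambda>g x. traj_b \<alpha> F a x \<eta> g"]) (rule traj_meas[OF meas aL])
    then have [measurable]: "(\<lambda>x. lp_norm p (traj_b \<alpha> F a x \<eta>)) \<in> borel_measurable M"
      unfolding lp_norm_def by (rule enn_root_meas)
    show ?thesis by measurable
  qed
  have nm: "nrm' \<in> borel_measurable M"
    unfolding nrm'_def using cD each by (rule borel_measurable_SUP)
  have "\<forall>\<eta>\<in>finD Q. AE x in M. lp_norm p (traj_b \<alpha> F a x \<eta>) / lp_norm p \<eta> \<le> ?L"
  proof
    fix \<eta> :: "'g \<Rightarrow> 'e" assume \<eta>D: "\<eta> \<in> finD Q"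
    obtain P where P: "finite P" "\<And>g. g \<notin> P \<Longrightarrow> \<eta> g = 0"
      using finD_support[OF \<eta>D] by blast
    have "lp_pow p \<eta> < \<infinity>" using lp_pow_finite_support[OF P] by simp
    then show "AE x in M. lp_norm p (traj_b \<alpha> F a x \<eta>) / lp_norm p \<eta> \<le> ?L"
      by (intro ae_bound[OF sf p meas aL])
  qed
  then have "AE x in M. \<forall>\<eta>\<in>finD Q. lp_norm p (traj_b \<alpha> F a x \<eta>) / lp_norm p \<eta> \<le> ?L"
    by (rule AE_ball_countable[OF cD, THEN iffD2])
  then have "AE x in M. nrm' x \<le> ?L"
    by eventually_elim (simp add: nrm'_def SUP_least)
  then have "esssup M nrm' \<le> ?L" by (rule esssup_I[OF nm])
  then show ?thesis by (simp only: eq)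
qed

theorem lemma3p5:
  fixes M :: "'w measure" and p :: real
    and \<alpha> :: "'g::{group_add, countable} \<Rightarrow> 'w \<Rightarrow> 'w"
    and F :: "'g set"
    and a :: "'g \<Rightarrow> 'w \<Rightarrow> ('e::{banach, second_countable_topology} \<Rightarrow>\<^sub>L 'e)"
  assumes "sigma_finite_measure M"
    and "separable_measure M"
    and "1 < p"
    and "\<And>g h. \<alpha> (g + h) = \<alpha> g \<circ> \<alpha> h"
    and "\<alpha> 0 = id"
    and "\<And>g. \<alpha> g \<in> measurable M M"
    and "\<And>g N. N \<in> null_sets M \<Longrightarrow> \<alpha> g -` N \<inter> space M \<in> null_sets M"
    and "\<And>g N. N \<in> null_sets M \<Longrightarrow> \<alpha> g ` N \<in> null_sets M"
    and "finite F"
    and "\<And>g. g \<in> F \<Longrightarrow> a g \<in> Linf_op M"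
  shows "op_norm (Hspace M p) (H_norm M p) (reg_b \<alpha> F a) (H_norm M p)
       = esssup M (\<lambda>x. op_norm (lpspace p) (lp_norm p) (traj_b \<alpha> F a x) (lp_norm p))"
proof -
  have p: "0 < p" using assms(3) by simp
  show ?thesis
    by (rule antisym[OF part1[OF p assms(6) assms(10)] part2[OF assms(1) p assms(6) assms(10) assms(9)]])
qed

end
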